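(* Let $n\ge1$ be an integer, $x$ an indeterminate, and let $A$ be the $n\times n$ matrix with entries $A_{ij}=(1-x^i)^{n+1-j}(1-x^{i+1})^{n+1-j}x^{i(j-1)}$ for $1\le i,j\le n$. Then $$\det A=(-1)^{\frac{n(n-1)}{2}}x^{\frac{n(n^2-1)}{6}}\prod_{k=1}^{n}(1-x^{2k-1})^{n+1-k}(1-x^{2k})^{n+1-k}.$$ *)

theory Defs
  imports "Jordan_Normal_Form.Determinant" "HOL-Computational_Algebra.Polynomial"
begin

end

theory Submission
  imports Defs
begin

lemma det_scale_rows:
  fixes c :: "nat \<Rightarrow> 'a :: comm_ring_1"
  shows "det (mat n n (\<lambda>(i,j). c i * f i j)) = prod c {0..<n} * det (mat n n (\<lambda>(i,j). f i j))"
proof -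
  have A: "mat n n (\<lambda>(i,j). c i * f i j) \<in> carrier_mat n n" by simp
  have B: "mat n n (\<lambda>(i,j). f i j) \<in> carrier_mat n n" by simp
  show ?thesis unfolding det_def'[OF A] det_def'[OF B]
  proof (rule trans[OF sum.cong sum_distrib_left[symmetric]])
    fix p assume p: "p \<in> {p. p permutes {0..<n}}"
    have "(\<Prod>i\<in>{0..<n}. mat n n (\<lambda>(i,j). c i * f i j) $$ (i, p i))
       = prod c {0..<n} * (\<Prod>i\<in>{0..<n}. mat n n (\<lambda>(i,j). f i j) $$ (i, p i))"
      unfolding prod.distrib[symmetric]
      by (rule prod.cong, insert p, auto simp: permutes_def)
    then show "signof p * (\<Prod>i\<in>{0..<n}. mat n n (\<lambda>(i,j). c i * f i j) $$ (i, p i)) =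
      prod c {0..<n} * (signof p * (\<Prod>i\<in>{0..<n}. mat n n (\<lambda>(i,j). f i j) $$ (i, p i)))"
      by simp
  qed simp
qed

lemma sum_two_delta:
  fixes f :: "nat \<Rightarrow> 'a :: comm_ring_1"
  assumes "a < N" "b < N" "a \<noteq> b"
  shows "(\<Sum>k\<in>{0..<N}. f k * ((if k = a then x else 0) + (if k = b then y else 0))) = f a * x + f b * y"
proof -
  have eq: "(\<lambda>k. f k * ((if k = a then x else 0) + (if k = b then y else 0))) = (\<lambda>k. (if k = a then f k * x else 0) + (if k = b then f k * y else 0))"
    by (auto simp: distrib_left)
  show ?thesis unfolding eq using assms by (simp add: sum.distrib)
qed

lemma hvdm:
  fixes u v :: "nat \<Rightarrow> 'a :: idom"
  assumes "\<And>i. u i \<noteq> 0"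
  shows "det (mat n n (\<lambda>(i,j). u i ^ (n - 1 - j) * v i ^ j))
    = (\<Prod>i<n. \<Prod>k\<in>{Suc i..<n}. u i * v k - u k * v i)"
  using assms
proof (induction n arbitrary: u v)
  case 0
  then show ?case by simp
next
  case (Suc m)
  define M where "M = mat (Suc m) (Suc m) (\<lambda>(i,j). u i ^ (Suc m - 1 - j) * v i ^ j)"
  define E :: "'a mat" where "E = mat (Suc m) (Suc m) (\<lambda>(k,j). if k = j then (if j = 0 then 1 else u 0) else if Suc k = j then - v 0 else 0)"
  have Mc: "M \<in> carrier_mat (Suc m) (Suc m)" unfolding M_def by simp
  have Ec: "E \<in> carrier_mat (Suc m) (Suc m)" unfolding E_def by simp
  have "upper_triangular E" unfolding E_def upper_triangular_def by auto
  have "diag_mat E = 1 # replicate m (u 0)"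
    by (rule nth_equalityI) (auto simp: diag_mat_def E_def nth_Cons simp del: upt_Suc split: nat.splits)
  then have detE: "det E = u 0 ^ m" using det_upper_triangular[OF \<open>upper_triangular E\<close> Ec] by simp
  define G where "G = M * E"
  have Gc: "G \<in> carrier_mat (Suc m) (Suc m)" unfolding G_def using Mc Ec by simp
  have detG: "det G = det M * u 0 ^ m" unfolding G_def using det_mult[OF Mc Ec] detE by simp
  have Gent: "G $$ (i, j) = (if j = 0 then u i ^ m else u 0 * (u i ^ (m - j) * v i ^ j) - v 0 * (u i ^ (m - (j - 1)) * v i ^ (j - 1)))"
    if ij: "i < Suc m" "j < Suc m" for i j
  proof -
    have s: "G $$ (i,j) = (\<Sum>k\<in>{0..<Suc m}. M $$ (i,k) * E $$ (k,j))"
      unfolding G_def using Mc Ec ij by (simp add: scalar_prod_def)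
    show ?thesis
    proof (cases j)
      case 0
      have "(\<Sum>k\<in>{0..<Suc m}. M $$ (i,k) * E $$ (k,j)) = (\<Sum>k\<in>{0..<Suc m}. if k = 0 then M $$ (i,k) else 0)"
        by (rule sum.cong) (auto simp: E_def 0)
      then show ?thesis using s 0 ij by (simp add: M_def)
    next
      case (Suc j')
      have "(\<Sum>k\<in>{0..<Suc m}. M $$ (i,k) * E $$ (k,j)) = (\<Sum>k\<in>{0..<Suc m}. M $$ (i,k) * ((if k = Suc j' then u 0 else 0) + (if k = j' then - v 0 else 0)))"
        by (rule sum.cong) (use ij in \<open>auto simp: E_def Suc\<close>)
      also have "\<dots> = M $$ (i, Suc j') * u 0 + M $$ (i, j') * (- v 0)"
        by (rule sum_two_delta) (use ij Suc in auto)
      finally show ?thesis using s Suc ij by (simp add: M_def)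
    qed
  qed
  have G0: "G $$ (0, j) = 0" if j: "0 < j" "j < Suc m" for j
  proof -
    obtain j' where j': "j = Suc j'" using j by (cases j) auto
    have e: "m - j' = Suc (m - Suc j')" using j j' by simp
    show ?thesis using Gent[of 0 j] j by (simp add: j' e algebra_simps)
  qed
  have "det G = (\<Sum>j<Suc m. G $$ (0,j) * cofactor G 0 j)" by (rule laplace_expansion_row[OF Gc]) simp
  also have "\<dots> = G $$ (0,0) * cofactor G 0 0 + (\<Sum>j<m. G $$ (0,Suc j) * cofactor G 0 (Suc j))"
    by (rule sum.lessThan_Suc_shift)
  also have "\<dots> = G $$ (0,0) * cofactor G 0 0" using G0 by simp
  also have "\<dots> = u 0 ^ m * det (mat_delete G 0 0)"
    using Gent[of 0 0] by (simp add: cofactor_def)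
  also have "mat_delete G 0 0 = mat m m (\<lambda>(i,j). (u 0 * v (Suc i) - u (Suc i) * v 0) * (u (Suc i) ^ (m - 1 - j) * v (Suc i) ^ j))"
  proof (rule eq_matI)
    fix i j assume ij: "i < dim_row (mat m m (\<lambda>(i,j). (u 0 * v (Suc i) - u (Suc i) * v 0) * (u (Suc i) ^ (m - 1 - j) * v (Suc i) ^ j)))"
      "j < dim_col (mat m m (\<lambda>(i,j). (u 0 * v (Suc i) - u (Suc i) * v 0) * (u (Suc i) ^ (m - 1 - j) * v (Suc i) ^ j)))"
    then have ij': "i < m" "j < m" by auto
    have e: "m - j = Suc (m - Suc j)" using ij' by simp
    have "mat_delete G 0 0 $$ (i, j) = G $$ (Suc i, Suc j)" using Gc ij' by (simp add: mat_delete_def)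
    also have "\<dots> = (u 0 * v (Suc i) - u (Suc i) * v 0) * (u (Suc i) ^ (m - 1 - j) * v (Suc i) ^ j)"
      using Gent[of "Suc i" "Suc j"] ij' by (simp add: e algebra_simps)
    finally show "mat_delete G 0 0 $$ (i, j) = mat m m (\<lambda>(i,j). (u 0 * v (Suc i) - u (Suc i) * v 0) * (u (Suc i) ^ (m - 1 - j) * v (Suc i) ^ j)) $$ (i, j)"
      using ij' by simp
  qed (use Gc in auto)
  also have "det \<dots> = prod (\<lambda>i. u 0 * v (Suc i) - u (Suc i) * v 0) {0..<m} * (\<Prod>i<m. \<Prod>k\<in>{Suc i..<m}. u (Suc i) * v (Suc k) - u (Suc k) * v (Suc i))"
    using det_scale_rows[where c="\<lambda>i. u 0 * v (Suc i) - u (Suc i) * v 0" and n=m and f="\<lambda>i j. u (Suc i) ^ (m - 1 - j) * v (Suc i) ^ j"]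
      Suc.IH[of "\<lambda>i. u (Suc i)" "\<lambda>i. v (Suc i)"] Suc.prems by simp
  finally have "det M * u 0 ^ m = u 0 ^ m * (prod (\<lambda>i. u 0 * v (Suc i) - u (Suc i) * v 0) {0..<m} * (\<Prod>i<m. \<Prod>k\<in>{Suc i..<m}. u (Suc i) * v (Suc k) - u (Suc k) * v (Suc i)))"
    using detG by simp
  then have "det M = prod (\<lambda>i. u 0 * v (Suc i) - u (Suc i) * v 0) {0..<m} * (\<Prod>i<m. \<Prod>k\<in>{Suc i..<m}. u (Suc i) * v (Suc k) - u (Suc k) * v (Suc i))"
    using Suc.prems[of 0] by (simp add: mult.commute)
  also have "\<dots> = (\<Prod>i<Suc m. \<Prod>k\<in>{Suc i..<Suc m}. u i * v k - u k * v i)"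
    unfolding prod.lessThan_Suc_shift prod.shift_bounds_Suc_ivl by (simp add: atLeast0LessThan)
  finally show ?case unfolding M_def .
qed

lemma dprod_Suc:
  fixes g :: "nat \<Rightarrow> nat \<Rightarrow> 'a :: comm_monoid_mult"
  shows "(\<Prod>i<Suc n. \<Prod>k\<in>{Suc i..<Suc n}. g i k) = (\<Prod>i<n. \<Prod>k\<in>{Suc i..<n}. g i k) * (\<Prod>i<n. g i n)"
proof -
  have "(\<Prod>i<Suc n. \<Prod>k\<in>{Suc i..<Suc n}. g i k) = (\<Prod>i<n. \<Prod>k\<in>{Suc i..<Suc n}. g i k)"
    by simp
  also have "\<dots> = (\<Prod>i<n. (\<Prod>k\<in>{Suc i..<n}. g i k) * g i n)"
    by (rule prod.cong) (auto simp: prod.atLeastLessThan_Suc)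
  finally show ?thesis by (simp add: prod.distrib)
qed

lemma dsum_Suc:
  fixes g :: "nat \<Rightarrow> nat \<Rightarrow> 'a :: comm_monoid_add"
  shows "(\<Sum>i<Suc n. \<Sum>k\<in>{Suc i..<Suc n}. g i k) = (\<Sum>i<n. \<Sum>k\<in>{Suc i..<n}. g i k) + (\<Sum>i<n. g i n)"
proof -
  have "(\<Sum>i<Suc n. \<Sum>k\<in>{Suc i..<Suc n}. g i k) = (\<Sum>i<n. \<Sum>k\<in>{Suc i..<Suc n}. g i k)"
    by simp
  also have "\<dots> = (\<Sum>i<n. (\<Sum>k\<in>{Suc i..<n}. g i k) + g i n)"
    by (rule sum.cong) (auto simp: sum.atLeastLessThan_Suc)
  finally show ?thesis by (simp add: sum.distrib)
qed

lemma prod_split_add: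
  fixes f :: "nat \<Rightarrow> 'a :: comm_monoid_mult"
  shows "(\<Prod>d<a+b. f d) = (\<Prod>d<a. f d) * (\<Prod>i<b. f (a+i))"
  by (induction b) (simp_all add: mult_ac)

lemma count1: "2 * (\<Sum>i<n. \<Sum>k\<in>{Suc i..<n}. (1::nat)) = n * (n - 1)"
proof (induction n)
  case 0 then show ?case by simp
next
  case (Suc n)
  then show ?case unfolding dsum_Suc by (cases n) (simp_all add: algebra_simps)
qed

lemma gsum: "2 * (\<Sum>i<n. (i + 1::nat)) = n * (n + 1)"
  by (induction n) (simp_all add: algebra_simps)

lemma count2: "6 * (\<Sum>i<n. \<Sum>k\<in>{Suc i..<n}. (i + 1::nat)) = n * (n^2 - 1)"
proof (induction n)
  case 0 then show ?case by simp
next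
  case (Suc n)
  have "6 * (\<Sum>i<Suc n. \<Sum>k\<in>{Suc i..<Suc n}. (i + 1::nat)) = n * (n^2 - 1) + 3 * (n * (n + 1))"
  proof -
    define A where "A = (\<Sum>i<n. \<Sum>k\<in>{Suc i..<n}. (i + 1::nat))"
    define B where "B = (\<Sum>i<n. (i + 1::nat))"
    have "6 * (\<Sum>i<Suc n. \<Sum>k\<in>{Suc i..<Suc n}. (i + 1::nat)) = 6 * (A + B)"
      unfolding dsum_Suc A_def B_def by simp
    also have "\<dots> = 6 * A + 3 * (2 * B)" by simp
    finally show ?thesis using Suc.IH gsum[of n] unfolding A_def B_def by simp
  qed
  also have "\<dots> = Suc n * ((Suc n)^2 - 1)"
    by (cases n) (simp_all add: algebra_simps power2_eq_square)
  finally show ?case .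
qed

lemma lhs_id:
  fixes x :: "'a :: comm_ring_1"
  shows "(\<Prod>i<n. (1 - x^(i+1)) * (1 - x^(i+2))) * (\<Prod>i<n. \<Prod>k\<in>{Suc i..<n}. (1 - x^(k-i)) * (1 - x^(i+k+3)))
    = (\<Prod>m<n. \<Prod>d<2*m+2. 1 - x^(d+1))"
proof (induction n)
  case 0 then show ?case by simp
next
  case (Suc n)
  have h1: "(\<Prod>i<n. 1 - x^(n-i)) = (\<Prod>d<n. 1 - x^(d+1))"
  proof -
    have "(\<Prod>i<n. 1 - x^(n-i)) = (\<Prod>i<n. 1 - x^(n - Suc i + 1))"
      by (rule prod.cong, simp, rule arg_cong[where f="\<lambda>e. 1 - x^e"], simp)
    also have "\<dots> = (\<Prod>d<n. 1 - x^(d+1))" by (rule prod.nat_diff_reindex)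
    finally show ?thesis .
  qed
  have h2: "(\<Prod>d<2*n+2. 1 - x^(d+1)) = (\<Prod>d<n+2. 1 - x^(d+1)) * (\<Prod>i<n. 1 - x^(n+2+i+1))"
    using prod_split_add[of "\<lambda>d. 1 - x^(d+1)" "n+2" n] by (simp add: mult_2)
  have h3: "(\<Prod>i<n. 1 - x^(n+2+i+1)) = (\<Prod>i<n. 1 - x^(i+n+3))"
    by (rule prod.cong, simp, rule arg_cong[where f="\<lambda>e. 1 - x^e"], simp)
  have key: "(1 - x^(n+1)) * (1 - x^(n+2)) * (\<Prod>i<n. (1 - x^(n-i)) * (1 - x^(i+n+3))) = (\<Prod>d<2*n+2. 1 - x^(d+1))"
    unfolding h2 h3 prod.distrib h1 by (simp add: mult_ac)
  show ?case
    unfolding dprod_Suc prod.lessThan_Suc[of _ n] using Suc.IH key[symmetric]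
    by (simp add: mult_ac)
qed

lemma qeven:
  fixes x :: "'a :: comm_ring_1"
  shows "(\<Prod>k=1..m. (1 - x^(2*k-1)) * (1 - x^(2*k))) = (\<Prod>d<2*m. 1 - x^(d+1))"
proof (induction m)
  case 0 then show ?case by simp
next
  case (Suc m)
  have "(\<Prod>d<2*Suc m. 1 - x^(d+1)) = (\<Prod>d<2*m. 1 - x^(d+1)) * (1 - x^(2*m+1)) * (1 - x^(2*m+2))"
    by (simp add: mult_ac)
  then show ?case using Suc.IH by (simp add: mult_ac)
qed

lemma rhs_id:
  fixes x :: "'a :: comm_ring_1"
  shows "(\<Prod>k=1..n. (1 - x^(2*k-1))^(n+1-k) * (1 - x^(2*k))^(n+1-k)) = (\<Prod>m<n. \<Prod>d<2*m+2. 1 - x^(d+1))"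
proof (induction n)
  case 0 then show ?case by simp
next
  case (Suc n)
  have "(\<Prod>k=1..Suc n. (1 - x^(2*k-1))^(Suc n+1-k) * (1 - x^(2*k))^(Suc n+1-k))
     = (\<Prod>k=1..n. (1 - x^(2*k-1))^(Suc n+1-k) * (1 - x^(2*k))^(Suc n+1-k)) * ((1 - x^(2*Suc n-1)) * (1 - x^(2*Suc n)))"
    by simp
  also have "(\<Prod>k=1..n. (1 - x^(2*k-1))^(Suc n+1-k) * (1 - x^(2*k))^(Suc n+1-k))
     = (\<Prod>k=1..n. ((1 - x^(2*k-1))^(n+1-k) * (1 - x^(2*k))^(n+1-k)) * ((1 - x^(2*k-1)) * (1 - x^(2*k))))"
    by (rule prod.cong) (auto simp: Suc_diff_le mult_ac)
  also have "\<dots> = (\<Prod>k=1..n. (1 - x^(2*k-1))^(n+1-k) * (1 - x^(2*k))^(n+1-k)) * (\<Prod>k=1..n. (1 - x^(2*k-1)) * (1 - x^(2*k)))"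
    by (rule prod.distrib)
  finally have "(\<Prod>k=1..Suc n. (1 - x^(2*k-1))^(Suc n+1-k) * (1 - x^(2*k))^(Suc n+1-k))
     = (\<Prod>k=1..n. (1 - x^(2*k-1))^(n+1-k) * (1 - x^(2*k))^(n+1-k)) * (\<Prod>k=1..Suc n. (1 - x^(2*k-1)) * (1 - x^(2*k)))"
    by (simp add: mult_ac)
  then show ?case using Suc.IH qeven[of x "Suc n"] by simp
qed

theorem lemma2p8:
  fixes n :: nat and x :: "int poly"
  assumes "n \<ge> 1"
    and "x = [:0, 1:]"
  shows "det (mat n n (\<lambda>(i, j). (1 - x ^ (i + 1)) ^ (n - j) * (1 - x ^ (i + 2)) ^ (n - j)
                                  * x ^ ((i + 1) * j)))
         = (-1) ^ (n * (n - 1) div 2) * x ^ (n * (n\<^sup>2 - 1) div 6)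
           * (\<Prod>k = 1..n. (1 - x ^ (2 * k - 1)) ^ (n + 1 - k) * (1 - x ^ (2 * k)) ^ (n + 1 - k))"
proof -
  define u where "u = (\<lambda>i::nat. (1 - x^(i+1)) * (1 - x^(i+2)))"
  define v where "v = (\<lambda>i::nat. x^(i+1))"
  have unz: "u i \<noteq> 0" for i
  proof
    assume "u i = 0"
    then have "poly (u i) 0 = 0" by simp
    then show False unfolding u_def using assms(2) by simp
  qed
  have mat_eq: "mat n n (\<lambda>(i, j). (1 - x ^ (i + 1)) ^ (n - j) * (1 - x ^ (i + 2)) ^ (n - j) * x ^ ((i + 1) * j))
    = mat n n (\<lambda>(i,j). u i * (u i ^ (n - 1 - j) * v i ^ j))"
  proof (rule eq_matI)
    fix i j assume ij: "i < dim_row (mat n n (\<lambda>(i,j). u i * (u i ^ (n - 1 - j) * v i ^ j)))"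
      "j < dim_col (mat n n (\<lambda>(i,j). u i * (u i ^ (n - 1 - j) * v i ^ j)))"
    then have ij': "i < n" "j < n" by auto
    have e: "n - j = Suc (n - 1 - j)" using ij' by simp
    show "mat n n (\<lambda>(i, j). (1 - x ^ (i + 1)) ^ (n - j) * (1 - x ^ (i + 2)) ^ (n - j) * x ^ ((i + 1) * j)) $$ (i, j)
      = mat n n (\<lambda>(i,j). u i * (u i ^ (n - 1 - j) * v i ^ j)) $$ (i, j)"
    proof -
      have h1: "x^((i+1)*j) = v i ^ j" unfolding v_def by (rule power_mult)
      have h2: "(1 - x ^ (i + 1)) ^ (n - j) * (1 - x ^ (i + 2)) ^ (n - j) = u i * u i ^ (n - 1 - j)"
        unfolding u_def e power_mult_distrib[symmetric] by simp
      show ?thesis using ij' h1 h2 by (simp add: mult.assoc)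
    qed
  qed auto
  have pair: "u i * v k - u k * v i = (-1) * x^(i+1) * ((1 - x^(k-i)) * (1 - x^(i+k+3)))" if ik: "i < k" for i k
  proof -
    define a where "a = x^(i+1)"
    define b where "b = x^(k-i)"
    have e0: "x^(i+1) = a" by (simp add: a_def)
    have "k+1 = (i+1)+(k-i)" using ik by simp
    then have e1: "x^(k+1) = a*b" unfolding a_def b_def by (metis power_add)
    have "x^(k+2) = x^(Suc (k+1))" by simp
    also have "\<dots> = x * x^(k+1)" by (rule power_Suc)
    finally have e2: "x^(k+2) = x*(a*b)" using e1 by simp
    have "x^(i+2) = x^(Suc (i+1))" by simp
    also have "\<dots> = x * x^(i+1)" by (rule power_Suc)
    finally have e3: "x^(i+2) = x*a" using e0 by simp
    have "i+k+3 = Suc ((i+1)+(k+1))" by simp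
    then have e4: "x^(i+k+3) = x*(a*(a*b))" using e0 e1 by (metis power_add power_Suc)
    show ?thesis unfolding u_def v_def e0 e1 e2 e3 e4 b_def[symmetric] by (simp add: algebra_simps)
  qed
  define P where "P = (\<lambda>i k. (1 - x^(k-i)) * (1 - x^(i+k+3)))"
  have "det (mat n n (\<lambda>(i, j). (1 - x ^ (i + 1)) ^ (n - j) * (1 - x ^ (i + 2)) ^ (n - j) * x ^ ((i + 1) * j)))
     = prod u {0..<n} * (\<Prod>i<n. \<Prod>k\<in>{Suc i..<n}. u i * v k - u k * v i)"
    unfolding mat_eq
    using det_scale_rows[where c=u and n=n and f="\<lambda>i j. u i ^ (n - 1 - j) * v i ^ j"] hvdm[of u n v] unz
    by simp
  also have "(\<Prod>i<n. \<Prod>k\<in>{Suc i..<n}. u i * v k - u k * v i)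
     = (\<Prod>i<n. \<Prod>k\<in>{Suc i..<n}. (-1) * x^(i+1) * P i k)"
    by (rule prod.cong, simp, rule prod.cong, simp, simp add: pair P_def)
  also have "\<dots> = (\<Prod>i<n. \<Prod>k\<in>{Suc i..<n}. (-1::int poly)) * (\<Prod>i<n. \<Prod>k\<in>{Suc i..<n}. x^(i+1)) * (\<Prod>i<n. \<Prod>k\<in>{Suc i..<n}. P i k)"
    by (simp only: prod.distrib)
  also have "(\<Prod>i<n. \<Prod>k\<in>{Suc i..<n}. (-1::int poly)) = (-1) ^ (\<Sum>i<n. \<Sum>k\<in>{Suc i..<n}. (1::nat))"
    unfolding power_sum by simp
  also have "(\<Sum>i<n. \<Sum>k\<in>{Suc i..<n}. (1::nat)) = n * (n - 1) div 2"
    using count1[of n] by linarith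
  also have "(\<Prod>i<n. \<Prod>k\<in>{Suc i..<n}. x^(i+1)) = x ^ (\<Sum>i<n. \<Sum>k\<in>{Suc i..<n}. (i + 1::nat))"
    unfolding power_sum by simp
  also have "(\<Sum>i<n. \<Sum>k\<in>{Suc i..<n}. (i + 1::nat)) = n * (n\<^sup>2 - 1) div 6"
    using count2[of n] by linarith
  finally have "det (mat n n (\<lambda>(i, j). (1 - x ^ (i + 1)) ^ (n - j) * (1 - x ^ (i + 2)) ^ (n - j) * x ^ ((i + 1) * j)))
     = (-1) ^ (n * (n - 1) div 2) * x ^ (n * (n\<^sup>2 - 1) div 6) * (prod u {..<n} * (\<Prod>i<n. \<Prod>k\<in>{Suc i..<n}. P i k))"
    by (simp add: atLeast0LessThan mult_ac)
  also have "prod u {..<n} * (\<Prod>i<n. \<Prod>k\<in>{Suc i..<n}. P i k)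
     = (\<Prod>k = 1..n. (1 - x ^ (2 * k - 1)) ^ (n + 1 - k) * (1 - x ^ (2 * k)) ^ (n + 1 - k))"
    unfolding u_def P_def lhs_id rhs_id by simp
  finally show ?thesis .
qed

end
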